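(* Let $F_0(x)=\frac{1}{1+x}$, $G_0(x)=\frac{x}{1+x}$, $H_0(x)=\frac{x(x+2)}{2(x+1)}$, and for $n\ge1$ let $F_n,G_n,H_n$ be the polynomials defined by $F_1=G_1=H_1=1$ and \[F_{n+1}(x)=(2n+2+(n+2)x)F_n(x)+(1+x)^2F_n'(x),\quad G_{n+1}(x)=(2n+nx)G_n(x)+(1+x)^2G_n'(x),\] \[H_{n+1}(x)=(2n-1+(n-1)x)H_n(x)+(1+x)^2H_n'(x).\] Writing $w=\frac{u+x}{1+x}e^{-\frac{x}{1+x}}$, we have \[\sum_{n\ge0}\frac{u^n}{n!}F_n(x)=\frac{1}{(1+x)^2}T_0(w),\qquad \sum_{n\ge0}\frac{u^n}{n!}G_n(x)=T(w),\qquad \sum_{n\ge0}\frac{u^n}{n!}H_n(x)=(1+x)T_2(w).\]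
   Context: $T(z)=\sum_{n\ge1}n^{n-1}z^n/n!$ (tree function, $T=ze^{T}$), $T_0(z)=\frac{1}{1-T(z)}=1+\sum_{n\ge1}n^nz^n/n!$, and $T_2(z)=\sum_{n\ge1}n^{n-2}z^n/n!=T(z)-\tfrac12T(z)^2$. The identities are of formal power series in $u$ and $x$ (rational functions of $x$ expanded around $x=0$; $w$ has zero constant term). *)

theory Defs
  imports "HOL-Computational_Algebra.Computational_Algebra"
begin

(* Bivariate formal power series in u and x are modelled as  real fps fps :
   the outer variable is u, the coefficients are power series in x. *)

(* tree function T, T_0 = 1/(1-T), T_2, as univariate series by their coefficients *)
definition Tfps :: "real fps" where
  "Tfps = Abs_fps (\<lambda>n. if n = 0 then 0 else real n ^ (n - 1) / fact n)"
definition T0fps :: "real fps" where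
  "T0fps = Abs_fps (\<lambda>n. real n ^ n / fact n)"
definition T2fps :: "real fps" where
  "T2fps = Abs_fps (\<lambda>n. if n = 0 then 0 else real n powr (real n - 2) / fact n)"

(* substitution f(w) of a bivariate series w with zero constant term into a univariate series f:
   coefficient of u^i x^j is the finite sum over k <= i+j (w^k has no terms of total degree < k) *)
definition bsubst :: "real fps \<Rightarrow> real fps fps \<Rightarrow> real fps fps" where
  "bsubst f w = Abs_fps (\<lambda>i. Abs_fps (\<lambda>j.
      \<Sum>k\<le>i+j. fps_nth f k * fps_nth (fps_nth (w ^ k) i) j))"

definition uvar :: "real fps fps" where "uvar = fps_X"
definition xvar :: "real fps fps" where "xvar = fps_const fps_X"

definition wser :: "real fps fps" where
  "wser = (uvar + xvar) * fps_const (inverse (1 + fps_X)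
            * fps_compose (fps_exp 1) (- fps_X * inverse (1 + fps_X)))"

(* polynomials F_n, G_n, H_n for n >= 1 (value at 0 is a dummy) *)
fun Fp :: "nat \<Rightarrow> real poly" where
  "Fp 0 = 0"
| "Fp (Suc 0) = 1"
| "Fp (Suc (Suc m)) = (let n = Suc m in
     [: 2 * real n + 2, real n + 2 :] * Fp n + [:1, 1:] ^ 2 * pderiv (Fp n))"

fun Gp :: "nat \<Rightarrow> real poly" where
  "Gp 0 = 0"
| "Gp (Suc 0) = 1"
| "Gp (Suc (Suc m)) = (let n = Suc m in
     [: 2 * real n, real n :] * Gp n + [:1, 1:] ^ 2 * pderiv (Gp n))"

fun Hp :: "nat \<Rightarrow> real poly" where
  "Hp 0 = 0"
| "Hp (Suc 0) = 1"
| "Hp (Suc (Suc m)) = (let n = Suc m in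
     [: 2 * real n - 1, real n - 1 :] * Hp n + [:1, 1:] ^ 2 * pderiv (Hp n))"

definition Fx :: "nat \<Rightarrow> real fps" where
  "Fx n = (if n = 0 then inverse (1 + fps_X) else fps_of_poly (Fp n))"
definition Gx :: "nat \<Rightarrow> real fps" where
  "Gx n = (if n = 0 then fps_X * inverse (1 + fps_X) else fps_of_poly (Gp n))"
definition Hx :: "nat \<Rightarrow> real fps" where
  "Hx n = (if n = 0 then fps_X * (fps_X + 2) * inverse (2 * (fps_X + 1))
           else fps_of_poly (Hp n))"

definition egf :: "(nat \<Rightarrow> real fps) \<Rightarrow> real fps fps" where
  "egf A = Abs_fps (\<lambda>n. fps_const (1 / fact n) * A n)"

end

theory Submission
  imports Defs
begin

lemma fd_identity:
  "(\<Sum>m\<le>N. of_nat (N choose m) * (-1)^(N-m) * (real m + 1)^N / fact N) = 1"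
proof -
  define E where "E = fps_exp (1::real)"
  define Q where "Q = fps_shift 1 (E - 1)"
  have EQ: "E - 1 = fps_X * Q"
    unfolding Q_def by (intro fps_ext) (auto simp: E_def)
  have Q0: "Q $ 0 = 1" by (simp add: Q_def E_def)
  have "(E * (E - 1)^N) $ N = (fps_X^N * (E * Q^N)) $ N"
    by (simp add: EQ power_mult_distrib algebra_simps)
  also have "\<dots> = 1" by (simp add: fps_X_power_mult_nth E_def Q0 fps_power_zeroth)
  finally have 1: "(E * (E - 1)^N) $ N = 1" .
  have c1: "(of_nat c :: real fps) = fps_const (of_nat c)" for c by (simp add: fps_of_nat)
  have c2: "((-1)::real fps)^k = fps_const ((-1)^k)" for k
  proof -
    have "(-1::real fps) = fps_const (-1)" by simp
    then show ?thesis by (simp only: fps_const_power)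
  qed
  have "E * (E - 1)^N = E * (E + (-1))^N" by simp
  also have "\<dots> = (\<Sum>m\<le>N. fps_const (of_nat (N choose m) * (-1)^(N-m)) * fps_exp (real m + 1))"
    unfolding binomial_ring sum_distrib_left
  proof (intro sum.cong refl)
    fix k
    have e: "E * E^k = fps_exp (real k + 1)"
      by (simp add: E_def fps_exp_power_mult fps_exp_add_mult[symmetric] add.commute)
    have "E * (of_nat (N choose k) * E ^ k * (-1) ^ (N - k))
        = fps_const (of_nat (N choose k)) * fps_const ((-1)^(N-k)) * (E * E^k)"
      by (subst c1, subst c2) (simp add: algebra_simps)
    then show "E * (of_nat (N choose k) * E ^ k * (-1) ^ (N - k))
        = fps_const (of_nat (N choose k) * (-1)^(N-k)) * fps_exp (real k + 1)"
      by (simp add: e)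
  qed
  finally have 2: "(E * (E - 1)^N) $ N = (\<Sum>m\<le>N. of_nat (N choose m) * (-1)^(N-m) * (real m + 1)^N / fact N)"
    by (simp add: fps_sum_nth)
  show ?thesis using 1 2 by simp
qed

lemma comp_mult_nth:
  fixes a D b :: "real fps"
  assumes b0: "b $ 0 = 0"
  shows "(a * (D oo b)) $ j = (\<Sum>m=0..j. D $ m * (a * b^m) $ j)"
proof -
  have z: "(b^m) $ n = 0" if "n < m" for m n
    using startsby_zero_power_prefix[OF b0, of m] that by blast
  have "(a * (D oo b)) $ j = (\<Sum>l=0..j. a$l * (\<Sum>m=0..j-l. D$m * (b^m)$(j-l)))"
    by (simp add: fps_mult_nth fps_compose_nth)
  also have "\<dots> = (\<Sum>l=0..j. a$l * (\<Sum>m=0..j. D$m * (b^m)$(j-l)))"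
  proof -
    have ext: "(\<Sum>m=0..j-l. D$m * (b^m)$(j-l)) = (\<Sum>m=0..j. D$m * (b^m)$(j-l))" if "l \<le> j" for l
      by (rule sum.mono_neutral_left) (auto simp: z)
    show ?thesis by (intro sum.cong refl) (simp add: ext)
  qed
  also have "\<dots> = (\<Sum>m=0..j. D$m * (\<Sum>l=0..j. a$l * (b^m)$(j-l)))"
    unfolding sum_distrib_left by (subst sum.swap) (simp only: ac_simps)
  also have "\<dots> = (\<Sum>m=0..j. D $ m * (a * b^m) $ j)"
    by (simp add: fps_mult_nth)
  finally show ?thesis .
qed

lemma deriv_eq_imp:
  fixes f g :: "real fps"
  shows "fps_deriv f = fps_deriv g \<Longrightarrow> f$0 = g$0 \<Longrightarrow> f = g"
  by (simp add: fps_deriv_eq_iff)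

definition phi :: "real fps" where "phi = fps_X * fps_exp (-1)"

lemma phi0: "phi $ 0 = 0" by (simp add: phi_def)

lemma Tder_nth: "fps_deriv Tfps $ m = (real m + 1)^m / fact m"
proof -
  have "fps_deriv Tfps $ m = (real m + 1) * ((real m + 1)^m / fact (Suc m))"
    by (simp add: Tfps_def add.commute)
  also have "fact (Suc m) = (real m + 1) * fact m" by simp
  also have "(real m + 1) * ((real m + 1)^m / ((real m + 1) * fact m)) = (real m + 1)^m / fact m"
    by (simp add: add_pos_nonneg)
  finally show ?thesis .
qed

lemma Tder_phi: "(fps_deriv Tfps oo phi) * fps_exp (-1) = Abs_fps (\<lambda>_. 1)"
proof (intro fps_ext)
  fix N
  have "((fps_deriv Tfps oo phi) * fps_exp (-1)) $ N
      = (\<Sum>m=0..N. fps_deriv Tfps $ m * (fps_exp (-1) * phi^m) $ N)"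
    by (subst mult.commute) (rule comp_mult_nth[OF phi0])
  also have "\<dots> = (\<Sum>m=0..N. (real m + 1)^m / fact m * (fps_X^m * fps_exp (-(real m + 1))) $ N)"
  proof (intro sum.cong refl)
    fix m
    have "fps_exp (-1) * phi^m = fps_X^m * (fps_exp (-1) * fps_exp (of_nat m * (-1)))"
      unfolding phi_def power_mult_distrib fps_exp_power_mult by (simp only: ac_simps)
    also have "fps_exp (-1) * fps_exp (of_nat m * (-1)) = fps_exp (-(real m + 1))"
      by (simp only: fps_exp_add_mult[symmetric]) simp
    finally have "fps_exp (-1) * phi^m = fps_X^m * fps_exp (-(real m + 1))" .
    then show "fps_deriv Tfps $ m * (fps_exp (-1) * phi^m) $ N = (real m + 1)^m / fact m * (fps_X^m * fps_exp (-(real m + 1))) $ N"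
      unfolding Tder_nth by simp
  qed
  also have "\<dots> = (\<Sum>m\<le>N. of_nat (N choose m) * (-1)^(N-m) * (real m + 1)^N / fact N)"
    unfolding atLeast0AtMost
  proof (intro sum.cong refl)
    fix m assume "m \<in> {..N}"
    then have mN: "m \<le> N" by simp
    have pw: "(real m + 1)^m * (real m + 1)^(N-m) = (real m + 1)^N"
      by (simp add: power_add[symmetric] mN)
    show "(real m + 1)^m / fact m * (fps_X^m * fps_exp (-(real m + 1))) $ N
        = of_nat (N choose m) * (-1)^(N-m) * (real m + 1)^N / fact N"
    proof -
      have "(fps_X^m * fps_exp (-(real m + 1))) $ N = (-(real m + 1))^(N-m) / fact (N-m)"
        using mN by (simp add: fps_X_power_mult_nth)
      also have "(-(real m + 1))^(N-m) = (-1)^(N-m) * (real m + 1)^(N-m)"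
        by (rule power_minus)
      finally have e1: "(fps_X^m * fps_exp (-(real m + 1))) $ N = (-1)^(N-m) * (real m + 1)^(N-m) / fact (N-m)" .
      have e2: "(of_nat (N choose m)::real) = fact N / (fact m * fact (N-m))"
        using mN by (rule binomial_fact)
      have gen: "A / fm * (s * B / fk) = fN / (fm * fk) * s * (A * B) / fN"
        if "fN \<noteq> 0" "fm \<noteq> 0" "fk \<noteq> 0" for A B s fm fk fN :: real
        using that by (simp add: field_simps)
      show ?thesis unfolding e1 e2 pw[symmetric] by (rule gen) auto
    qed
  qed
  also have "\<dots> = 1" by (rule fd_identity)
  finally show "((fps_deriv Tfps oo phi) * fps_exp (-1)) $ N = Abs_fps (\<lambda>_. 1::real) $ N" by simp
qed

lemma T_phi: "Tfps oo phi = fps_X"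
proof (rule deriv_eq_imp)
  have dphi: "fps_deriv phi = fps_exp (-1) * (1 - fps_X)"
    by (simp add: phi_def algebra_simps fps_const_neg[symmetric])
  have "fps_deriv (Tfps oo phi) = ((fps_deriv Tfps oo phi) * fps_exp (-1)) * (1 - fps_X)"
    by (simp add: fps_compose_deriv phi0 dphi mult.assoc)
  also have "\<dots> = inverse (1 - fps_X) * (1 - fps_X)"
    by (simp add: Tder_phi fps_inverse_one_minus_fps_X)
  also have "\<dots> = 1" by (rule inverse_mult_eq_1) simp
  finally show "fps_deriv (Tfps oo phi) = fps_deriv fps_X" by simp
  show "(Tfps oo phi) $ 0 = fps_X $ 0" by (simp add: Tfps_def)
qed


definition Iv :: "real fps" where "Iv = inverse (1 + fps_X)"
definition ss :: "real fps" where "ss = fps_X * Iv"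
definition cc :: "real fps" where
  "cc = inverse (1 + fps_X) * fps_compose (fps_exp 1) (- fps_X * inverse (1 + fps_X))"
definition psi :: "real fps" where "psi = fps_X * cc"

lemma IX: "(1 + fps_X) * Iv = 1"
  unfolding Iv_def by (rule inverse_mult_eq_1') simp

lemma Iv0: "Iv $ 0 = 1" by (simp add: Iv_def)

lemma Iv_nz: "Iv \<noteq> 0" using Iv0 by auto

lemma dIv: "fps_deriv Iv = - (Iv^2)"
  unfolding Iv_def by (subst fps_inverse_deriv) simp_all

lemma ss0: "ss $ 0 = 0" by (simp add: ss_def)

lemma dss: "fps_deriv ss = Iv^2"
proof -
  have "fps_deriv ss = Iv - fps_X * Iv^2" by (simp add: ss_def dIv)
  also have "\<dots> = Iv^2" using IX by algebra
  finally show ?thesis .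
qed

lemma cc_alt: "cc = Iv * (fps_exp 1 oo (- ss))"
  by (simp add: cc_def Iv_def ss_def)

lemma dcc: "fps_deriv cc = - cc * Iv * (1 + Iv)"
proof -
  have m0: "(- ss) $ 0 = 0" by (simp add: ss0)
  have "fps_deriv (fps_exp 1 oo (- ss)) = (fps_exp 1 oo (- ss)) * (- (Iv^2))"
    by (simp add: fps_compose_deriv[OF m0] dss)
  then have "fps_deriv cc = - (Iv^2) * (fps_exp 1 oo (- ss)) + Iv * ((fps_exp 1 oo (- ss)) * (- (Iv^2)))"
    by (simp add: cc_alt dIv)
  then show ?thesis by (simp add: cc_alt algebra_simps power2_eq_square)
qed

lemma psi0: "psi $ 0 = 0" by (simp add: psi_def)

lemma dpsi: "fps_deriv psi = cc * Iv^2"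
proof -
  have "fps_deriv psi = cc + fps_X * (- cc * Iv * (1 + Iv))" by (simp add: psi_def dcc)
  also have "\<dots> = cc * Iv^2" using IX by algebra
  finally show ?thesis .
qed

lemma psi_phi: "psi = phi oo ss"
proof -
  have "fps_exp (-1) oo ss = (fps_exp 1 oo (- fps_X)) oo ss" by simp
  also have "\<dots> = fps_exp 1 oo ((- fps_X) oo ss)"
    by (rule fps_compose_assoc[symmetric]) (simp_all add: ss0)
  also have "(- fps_X) oo ss = - ss" by (simp add: fps_compose_uminus ss0)
  finally have e: "fps_exp (-1) oo ss = fps_exp 1 oo (- ss)" .
  have "phi oo ss = ss * (fps_exp (-1) oo ss)"
    by (simp add: phi_def fps_compose_mult_distrib ss0)
  also have "\<dots> = ss * (fps_exp 1 oo (- ss))" by (simp only: e)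
  also have "\<dots> = psi" unfolding psi_def cc_alt ss_def by (simp only: ac_simps)
  finally show ?thesis by simp
qed

lemma T_psi: "Tfps oo psi = ss"
proof -
  have "Tfps oo psi = (Tfps oo phi) oo ss"
    unfolding psi_phi by (rule fps_compose_assoc) (simp_all add: ss0 phi0)
  also have "\<dots> = ss" by (simp add: T_phi ss0)
  finally show ?thesis .
qed

lemma Tder_psi: "(fps_deriv Tfps oo psi) * cc = 1"
proof -
  have "fps_deriv (Tfps oo psi) = fps_deriv ss" by (simp add: T_psi)
  then have "(fps_deriv Tfps oo psi) * (cc * Iv^2) = Iv^2"
    by (simp add: fps_compose_deriv psi0 dpsi dss)
  then have "((fps_deriv Tfps oo psi) * cc) * Iv^2 = 1 * Iv^2" by (simp add: mult.assoc)
  moreover have nz: "Iv^2 \<noteq> 0" using Iv_nz by simp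
  ultimately show ?thesis using mult_right_cancel[OF nz] by blast
qed

lemma T0_alt: "T0fps = 1 + fps_X * fps_deriv Tfps"
proof (intro fps_ext)
  fix n show "T0fps $ n = (1 + fps_X * fps_deriv Tfps) $ n"
  proof (cases n)
    case 0 then show ?thesis by (simp add: T0fps_def)
  next
    case (Suc m)
    have a: "(1 + fps_X * fps_deriv Tfps) $ n = (real m + 1)^m / fact m"
      using Suc by (simp del: fps_deriv_nth add: Tder_nth)
    have b: "T0fps $ n = real (Suc m)^(Suc m) / fact (Suc m)"
      using Suc by (simp add: T0fps_def del: of_nat_Suc)
    have c: "real (Suc m)^(Suc m) / fact (Suc m) = real (Suc m)^m / fact m"
      by (simp only: fact_Suc power_Suc) (simp del: of_nat_Suc)
    show ?thesis unfolding a b c by (simp add: add.commute)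
  qed
qed

lemma T0_psi: "T0fps oo psi = 1 + fps_X"
proof -
  have "T0fps oo psi = 1 + psi * (fps_deriv Tfps oo psi)"
    by (simp add: T0_alt fps_compose_add_distrib fps_compose_mult_distrib psi0)
  also have "\<dots> = 1 + fps_X * ((fps_deriv Tfps oo psi) * cc)" by (simp add: psi_def ac_simps)
  finally show ?thesis by (simp add: Tder_psi)
qed

lemma T2_alt: "fps_X * fps_deriv T2fps = Tfps"
proof (intro fps_ext)
  fix n show "(fps_X * fps_deriv T2fps) $ n = Tfps $ n"
  proof (cases n)
    case 0 then show ?thesis by (simp add: Tfps_def)
  next
    case (Suc m)
    have xp: "x powr (r - 1) * x = x powr r" if "0 < x" for x r :: real
      using that by (simp add: powr_diff)
    have e: "real (Suc m) - 2 = real m - 1" by simp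
    have "real (Suc m) powr (real (Suc m) - 2) * real (Suc m) = real (Suc m) powr real m"
      unfolding e by (rule xp) simp
    also have "real (Suc m) powr real m = real (Suc m) ^ m" by (simp add: powr_realpow)
    finally have pw: "real (Suc m) powr (real (Suc m) - 2) * real (Suc m) = real (Suc m) ^ m" .
    have "(fps_X * fps_deriv T2fps) $ n = real (Suc m) * (real (Suc m) powr (real (Suc m) - 2) / fact (Suc m))"
      using Suc by (simp add: T2fps_def del: of_nat_Suc)
    also have "\<dots> = (real (Suc m) powr (real (Suc m) - 2) * real (Suc m)) / fact (Suc m)"
      by (simp add: algebra_simps)
    also have "\<dots> = Tfps $ n" unfolding pw using Suc by (simp add: Tfps_def del: of_nat_Suc)
    finally show ?thesis .
  qed
qed

lemma T2_psi: "T2fps oo psi = ss - fps_const (1/2) * ss^2"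
proof (rule deriv_eq_imp)
  have "psi * (fps_deriv T2fps oo psi) = ss"
  proof -
    have "(fps_X * fps_deriv T2fps) oo psi = Tfps oo psi" by (simp add: T2_alt)
    then show ?thesis by (simp add: fps_compose_mult_distrib psi0 T_psi)
  qed
  then have "fps_X * (cc * (fps_deriv T2fps oo psi)) = fps_X * Iv"
    by (simp add: psi_def ss_def ac_simps)
  then have k: "cc * (fps_deriv T2fps oo psi) = Iv" by simp
  have "fps_deriv (T2fps oo psi) = (cc * (fps_deriv T2fps oo psi)) * Iv^2"
    by (simp add: fps_compose_deriv psi0 dpsi ac_simps)
  also have "\<dots> = Iv^3" by (simp add: k power_numeral_reduce)
  also have "Iv^3 = fps_deriv (ss - fps_const (1/2) * ss^2)"
  proof -
    have two: "(2::real fps) = fps_const 2" by (rule fps_numeral_fps_const)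
    have h2: "fps_const (1/2) * (2::real fps) = 1" by (simp only: two fps_const_mult) simp
    have "fps_deriv (ss - fps_const (1/2) * ss^2) = Iv^2 - fps_const (1/2) * (ss * Iv^2 + Iv^2 * ss)"
      by (simp add: power2_eq_square dss algebra_simps)
    also have "\<dots> = Iv^3" using IX h2 ss_def by algebra
    finally show ?thesis by simp
  qed
  finally show "fps_deriv (T2fps oo psi) = fps_deriv (ss - fps_const (1/2) * ss^2)" .
  show "(T2fps oo psi) $ 0 = (ss - fps_const (1/2) * ss^2) $ 0"
    by (simp add: T2fps_def ss0 fps_power_zeroth)
qed


lemma nderiv_nth: "(fps_deriv ^^ i) (f::real fps) $ m = f $ (m + i) * fact (m + i) / fact m"
proof (induction i arbitrary: m)
  case 0 then show ?case by simp
next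
  case (Suc i)
  have "(fps_deriv ^^ Suc i) f $ m = of_nat (Suc m) * ((fps_deriv ^^ i) f $ (Suc m))" by simp
  also have "\<dots> = of_nat (Suc m) * (f $ (Suc m + i) * fact (Suc m + i) / fact (Suc m))"
    by (simp only: Suc.IH)
  also have "\<dots> = f $ (m + Suc i) * fact (m + Suc i) / fact m"
    by (simp del: of_nat_Suc)
  finally show ?case .
qed

lemma binom_nth:
  "((fps_X + fps_const (a::real fps))^k) $ i
     = (if i \<le> k then of_nat (k choose i) * a^(k-i) else 0)"
proof -
  have t: "(of_nat (k choose l) * fps_X^l * fps_const a^(k-l) :: real fps fps)
         = fps_const (of_nat (k choose l) * a^(k-l)) * fps_X^l" for l
    by (simp add: fps_of_nat[symmetric] ac_simps)
  have "((fps_X + fps_const a)^k) $ i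
      = (\<Sum>l\<le>k. (fps_const (of_nat (k choose l) * a^(k-l)) * fps_X^l) $ i)"
    unfolding binomial_ring t by (simp add: fps_sum_nth)
  also have "\<dots> = (\<Sum>l\<le>k. if i = l then of_nat (k choose l) * a^(k-l) else 0)"
    by (intro sum.cong refl) simp
  also have "\<dots> = (if i \<le> k then of_nat (k choose i) * a^(k-i) else 0)"
    by (simp add: sum.delta)
  finally show ?thesis .
qed

lemma wser_alt: "wser = (fps_X + fps_const fps_X) * fps_const cc"
  by (simp add: wser_def uvar_def xvar_def cc_def)

lemma wser_pow_nth:
  "(wser^k) $ i = (if i \<le> k then of_nat (k choose i) * fps_X^(k-i) * cc^k else 0)"
  by (simp add: wser_alt power_mult_distrib binom_nth)

lemma bsubst_nth0: "bsubst f w $ i $ j = (\<Sum>k\<le>i+j. f$k * (w^k) $ i $ j)"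
  by (simp add: bsubst_def)

lemma bsubst_nth:
  "bsubst f wser $ i = fps_const (1 / fact i) * cc^i * ((fps_deriv ^^ i) f oo psi)"
proof (intro fps_ext)
  fix j
  define g where "g k = f $ k * (of_nat (k choose i) * fps_X^(k-i) * cc^k) $ j" for k
  have "bsubst f wser $ i $ j = (\<Sum>k\<le>i+j. if i \<le> k then g k else 0)"
    unfolding bsubst_nth0 by (intro sum.cong refl) (simp add: wser_pow_nth g_def)
  also have "\<dots> = sum g {k \<in> {..i+j}. i \<le> k}" by (rule sum.inter_filter[symmetric]) simp
  also have "{k \<in> {..i+j}. i \<le> k} = {0+i..j+i}" by auto
  also have "sum g {0+i..j+i} = (\<Sum>m=0..j. g (m + i))" by (rule sum.shift_bounds_cl_nat_ivl)
  also have "\<dots> = (\<Sum>m=0..j. 1 / fact i * ((fps_deriv ^^ i) f $ m * (cc^i * psi^m) $ j))"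
  proof (intro sum.cong refl)
    fix m
    have e1: "cc^i * psi^m = fps_X^m * cc^(m+i)"
      by (simp add: psi_def power_mult_distrib power_add ac_simps)
    have e2: "(of_nat ((m+i) choose i) :: real) = fact (m+i) / (fact i * fact m)"
      using binomial_fact[of i "m+i"] by simp
    have e3: "(of_nat c * Y * Z :: real fps) $ j = of_nat c * (Y * Z) $ j" for c Y Z
      by (simp add: fps_of_nat[symmetric] mult.assoc)
    have "g (m + i) = f $ (m+i) * (fact (m+i) / (fact i * fact m)) * (fps_X^m * cc^(m+i)) $ j"
      unfolding g_def e3 e2[symmetric] by simp
    also have "\<dots> = 1 / fact i * ((f $ (m+i) * fact (m+i) / fact m) * (fps_X^m * cc^(m+i)) $ j)"
      by (simp add: field_simps)
    finally show "g (m + i) = 1 / fact i * ((fps_deriv ^^ i) f $ m * (cc^i * psi^m) $ j)"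
      unfolding e1 nderiv_nth .
  qed
  also have "\<dots> = 1 / fact i * (cc^i * ((fps_deriv ^^ i) f oo psi)) $ j"
    by (simp add: comp_mult_nth[OF psi0] sum_distrib_left)
  finally show "bsubst f wser $ i $ j = (fps_const (1 / fact i) * cc^i * ((fps_deriv ^^ i) f oo psi)) $ j"
    by (simp add: mult.assoc)
qed


lemma two_fps: "(2::real fps) = fps_const 2" by (rule fps_numeral_fps_const)

lemma cA: "fps_const (2 * x + 2) = 2 * fps_const x + (2::real fps)"
  by (simp only: two_fps fps_const_mult fps_const_add)
lemma cB: "fps_const (x + 2) = fps_const x + (2::real fps)"
  by (simp only: two_fps fps_const_mult fps_const_add)
lemma cC: "fps_const (2 * x - 1) = 2 * fps_const x - (1::real fps)"
  by (simp only: two_fps fps_const_mult fps_const_sub flip: fps_const_1_eq_1)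
lemma cD: "fps_const (x - 1) = fps_const x - (1::real fps)"
  by (simp only: fps_const_sub flip: fps_const_1_eq_1)
lemma cE: "fps_const (2 * x) = 2 * fps_const (x::real)"
  by (simp only: two_fps fps_const_mult)

lemma rec_eq:
  fixes A B :: "nat \<Rightarrow> real fps"
  assumes "A 0 = B 0" "\<And>i. A (Suc i) = R i (A i)" "\<And>i. B (Suc i) = R i (B i)"
  shows "A i = B i"
  by (induction i) (simp_all add: assms)

lemma dcomp: "fps_deriv ((fps_deriv ^^ i) f oo psi) = ((fps_deriv ^^ Suc i) f oo psi) * (cc * Iv^2)"
  by (simp add: fps_compose_deriv psi0 dpsi)

lemma dccpow: "fps_deriv (cc^i) = - fps_const (real i) * cc^i * Iv * (1 + Iv)"
proof (cases i)
  case 0 then show ?thesis by simp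
next
  case (Suc n)
  have "fps_deriv (cc^i) = fps_const (real (Suc n)) * (- cc * Iv * (1 + Iv)) * cc^n"
    by (simp only: Suc fps_deriv_power dcc diff_Suc_1)
  also have "\<dots> = - fps_const (real i) * cc^i * Iv * (1 + Iv)"
    unfolding Suc power_Suc by algebra
  finally show ?thesis .
qed

lemma dIv2: "fps_deriv (Iv^2) = - 2 * Iv^3"
proof -
  have "fps_deriv (Iv^2) = fps_deriv (Iv * Iv)" by (simp add: power2_eq_square)
  also have "\<dots> = Iv * (- (Iv^2)) + (- (Iv^2)) * Iv" by (simp add: dIv)
  also have "\<dots> = - 2 * Iv^3" by (simp add: power_numeral_reduce algebra_simps)
  finally show ?thesis .
qed

definition RG :: "nat \<Rightarrow> real fps \<Rightarrow> real fps" where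
  "RG i y = (fps_const (2 * real i) + fps_const (real i) * fps_X) * y + (1 + fps_X)^2 * fps_deriv y"
definition RF :: "nat \<Rightarrow> real fps \<Rightarrow> real fps" where
  "RF i y = (fps_const (2 * real i + 2) + fps_const (real i + 2) * fps_X) * y + (1 + fps_X)^2 * fps_deriv y"
definition RH :: "nat \<Rightarrow> real fps \<Rightarrow> real fps" where
  "RH i y = (fps_const (2 * real i - 1) + fps_const (real i - 1) * fps_X) * y + (1 + fps_X)^2 * fps_deriv y"

definition BG :: "nat \<Rightarrow> real fps" where "BG i = cc^i * ((fps_deriv ^^ i) Tfps oo psi)"
definition BF :: "nat \<Rightarrow> real fps" where "BF i = Iv^2 * cc^i * ((fps_deriv ^^ i) T0fps oo psi)"
definition BH :: "nat \<Rightarrow> real fps" where "BH i = (1 + fps_X) * cc^i * ((fps_deriv ^^ i) T2fps oo psi)"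

lemma BG_rec: "BG (Suc i) = RG i (BG i)"
proof -
  define n where "n = fps_const (real i)"
  define a where "a = (fps_deriv ^^ i) Tfps oo psi"
  define b where "b = (fps_deriv ^^ Suc i) Tfps oo psi"
  define C where "C = cc^i"
  have da: "fps_deriv a = b * (cc * Iv^2)" unfolding a_def b_def by (rule dcomp)
  have dC: "fps_deriv C = - n * C * Iv * (1 + Iv)" unfolding C_def n_def by (rule dccpow)
  have "BG (Suc i) = cc * C * b" by (simp add: BG_def C_def b_def)
  also have "\<dots> = (2 * n + n * fps_X) * (C * a) + (1 + fps_X)^2 * (- n * C * Iv * (1 + Iv) * a + C * (b * (cc * Iv^2)))"
    using IX by algebra
  also have "\<dots> = RG i (BG i)"
    by (simp add: RG_def BG_def C_def[symmetric] a_def[symmetric] n_def[symmetric] cE dC da)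
  finally show ?thesis .
qed

lemma BF_rec: "BF (Suc i) = RF i (BF i)"
proof -
  define n where "n = fps_const (real i)"
  define a where "a = (fps_deriv ^^ i) T0fps oo psi"
  define b where "b = (fps_deriv ^^ Suc i) T0fps oo psi"
  define C where "C = cc^i"
  have da: "fps_deriv a = b * (cc * Iv^2)" unfolding a_def b_def by (rule dcomp)
  have dC: "fps_deriv C = - n * C * Iv * (1 + Iv)" unfolding C_def n_def by (rule dccpow)
  have "BF (Suc i) = Iv^2 * cc * C * b" by (simp add: BF_def C_def b_def ac_simps)
  also have "\<dots> = (2 * n + 2 + (n + 2) * fps_X) * (Iv^2 * C * a) + (1 + fps_X)^2 *
      ((- 2 * Iv^3) * C * a + Iv^2 * (- n * C * Iv * (1 + Iv)) * a + Iv^2 * C * (b * (cc * Iv^2)))"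
    using IX by algebra
  also have "\<dots> = RF i (BF i)"
  proof -
    have RFn: "RF i y = (2 * n + 2 + (n + 2) * fps_X) * y + (1 + fps_X)^2 * fps_deriv y" for y
      unfolding RF_def n_def cB cE ..
    show ?thesis unfolding RFn
      by (simp add: BF_def C_def[symmetric] a_def[symmetric] dC da dIv2 algebra_simps)
  qed
  finally show ?thesis .
qed

lemma BH_rec: "BH (Suc i) = RH i (BH i)"
proof -
  define n where "n = fps_const (real i)"
  define a where "a = (fps_deriv ^^ i) T2fps oo psi"
  define b where "b = (fps_deriv ^^ Suc i) T2fps oo psi"
  define C where "C = cc^i"
  have da: "fps_deriv a = b * (cc * Iv^2)" unfolding a_def b_def by (rule dcomp)
  have dC: "fps_deriv C = - n * C * Iv * (1 + Iv)" unfolding C_def n_def by (rule dccpow)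
  have "BH (Suc i) = (1 + fps_X) * cc * C * b" by (simp add: BH_def C_def b_def ac_simps)
  also have "\<dots> = (2 * n - 1 + (n - 1) * fps_X) * ((1 + fps_X) * C * a) + (1 + fps_X)^2 *
      (C * a + (1 + fps_X) * (- n * C * Iv * (1 + Iv)) * a + (1 + fps_X) * C * (b * (cc * Iv^2)))"
    using IX by algebra
  also have "\<dots> = RH i (BH i)"
  proof -
    have RHn: "RH i y = (2 * n - 1 + (n - 1) * fps_X) * y + (1 + fps_X)^2 * fps_deriv y" for y
      unfolding RH_def n_def cD cE ..
    show ?thesis unfolding RHn
      by (simp add: BH_def C_def[symmetric] a_def[symmetric] dC da algebra_simps)
  qed
  finally show ?thesis .
qed


definition hh :: "real fps" where "hh = fps_const (1/2)"

lemma h2: "hh * 2 = 1"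
  unfolding hh_def by (simp only: two_fps fps_const_mult) simp

lemma dhh: "fps_deriv hh = 0" by (simp add: hh_def)

lemma z0: "fps_const (real 0) = (0::real fps)" by simp

lemma Gx_rec: "Gx (Suc i) = RG i (Gx i)"
proof (cases i)
  case 0
  have g0: "Gx 0 = ss" by (simp add: Gx_def ss_def Iv_def)
  have "RG 0 (Gx 0) = (2 * fps_const (real 0) + fps_const (real 0) * fps_X) * ss + (1 + fps_X)^2 * Iv^2"
    by (simp only: RG_def g0 dss cE)
  also have "\<dots> = 1" unfolding z0 using IX by algebra
  finally show ?thesis using 0 by (simp add: Gx_def)
next
  case (Suc m)
  then show ?thesis
    by (simp add: Gx_def RG_def Let_def fps_of_poly_simps algebra_simps del: of_nat_Suc)
qed

lemma Fx_rec: "Fx (Suc i) = RF i (Fx i)"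
proof (cases i)
  case 0
  have f0: "Fx 0 = Iv" by (simp add: Fx_def Iv_def)
  have "RF 0 (Fx 0) = (2 * fps_const (real 0) + 2 + (fps_const (real 0) + 2) * fps_X) * Iv + (1 + fps_X)^2 * (- (Iv^2))"
    by (simp only: RF_def f0 dIv cB cE)
  also have "\<dots> = 1" unfolding z0 using IX by algebra
  finally show ?thesis using 0 by (simp add: Fx_def)
next
  case (Suc m)
  then show ?thesis
    by (simp add: Fx_def RF_def Let_def fps_of_poly_simps algebra_simps del: of_nat_Suc)
qed

lemma Hx0: "Hx 0 = fps_X * (fps_X + 2) * (hh * Iv)"
proof -
  have a: "inverse (2 * (fps_X + 1)) = inverse (2::real fps) * inverse (fps_X + 1)"
    by (rule fps_inverse_mult)
  have b: "inverse (fps_X + 1) = Iv" by (simp add: Iv_def add.commute)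
  have c: "inverse (2::real fps) = hh" by (simp add: hh_def inverse_fps_numeral)
  have hinv: "inverse (2 * (fps_X + 1)) = hh * Iv" by (simp only: a b c)
  show ?thesis unfolding Hx_def by (simp only: hinv) simp
qed

lemma Hx_rec: "Hx (Suc i) = RH i (Hx i)"
proof (cases i)
  case 0
  define E where "E = (2 * fps_X + 2) * (hh * Iv) + fps_X * (fps_X + 2) * (hh * (- (Iv^2)))"
  have dH: "fps_deriv (fps_X * (fps_X + 2) * (hh * Iv)) = E"
    unfolding E_def by (simp add: dIv dhh algebra_simps)
  have "RH 0 (Hx 0) = (2 * fps_const (real 0) - 1 + (fps_const (real 0) - 1) * fps_X) * (fps_X * (fps_X + 2) * (hh * Iv)) + (1 + fps_X)^2 * E"
    by (simp only: RH_def Hx0 dH cD cE)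
  also have "\<dots> = 1" unfolding z0 E_def using IX h2 by algebra
  finally show ?thesis using 0 by (simp add: Hx_def)
next
  case (Suc m)
  then show ?thesis
    by (simp add: Hx_def RH_def Let_def fps_of_poly_simps algebra_simps del: of_nat_Suc)
qed

lemma G_eq: "Gx i = BG i"
proof (rule rec_eq[where R = RG])
  show "Gx 0 = BG 0" by (simp add: Gx_def BG_def T_psi ss_def Iv_def)
qed (simp_all add: Gx_rec BG_rec)

lemma F_eq: "Fx i = BF i"
proof (rule rec_eq[where R = RF])
  have "BF 0 = Iv^2 * (1 + fps_X)" by (simp add: BF_def T0_psi)
  also have "\<dots> = Iv" using IX by algebra
  finally show "Fx 0 = BF 0" by (simp add: Fx_def Iv_def)
qed (simp_all add: Fx_rec BF_rec)

lemma H_eq: "Hx i = BH i"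
proof (rule rec_eq[where R = RH])
  have "BH 0 = (1 + fps_X) * (ss - hh * ss^2)" by (simp add: BH_def T2_psi hh_def)
  also have "\<dots> = fps_X * (fps_X + 2) * (hh * Iv)" using IX h2 ss_def by algebra
  finally show "Hx 0 = BH 0" by (simp add: Hx0)
qed (simp_all add: Hx_rec BH_rec)

theorem mainTheorem6:
  shows "egf Fx = fps_const (inverse ((1 + fps_X) ^ 2)) * bsubst T0fps wser
       \<and> egf Gx = bsubst Tfps wser
       \<and> egf Hx = fps_const (1 + fps_X) * bsubst T2fps wser"
proof (intro conjI; rule fps_ext)
  fix i
  have inv: "inverse ((1 + fps_X) ^ 2) = Iv^2" by (simp add: Iv_def fps_inverse_power)
  show "egf Fx $ i = (fps_const (inverse ((1 + fps_X) ^ 2)) * bsubst T0fps wser) $ i"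
    unfolding inv by (simp add: egf_def bsubst_nth F_eq BF_def ac_simps)
next
  fix i
  show "egf Gx $ i = bsubst Tfps wser $ i"
    by (simp add: egf_def bsubst_nth G_eq BG_def ac_simps)
next
  fix i
  show "egf Hx $ i = (fps_const (1 + fps_X) * bsubst T2fps wser) $ i"
    by (simp add: egf_def bsubst_nth H_eq BH_def ac_simps)
qed

end
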